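(* Assume $\mathrm{recc}(C)\subseteq\mathrm{recc}(P^B)$. Let $D\subseteq N_1\cup N_2$, let $(i,j)\in M_D\times(N\setminus D)$, and let $\gamma\in[0,\gamma_{ij})$. Then $\alpha_i\bar r^i+\gamma\bar r^j\in\mathrm{recc}(G_D^C)$.
   Context: Let $A\in\mathbb{R}^{m\times n}$ have full row rank, $b\in\mathbb{R}^m$, and $P=\{x\in\mathbb{R}^n_+:Ax=b\}$. Let $C\subseteq\mathbb{R}^n$ be an open convex set. Fix a basis $B$ of $P$ with nonbasic set $N=\{1,\dots,n\}\setminus B$. Write $P=\{x:x_i=\bar b_i-\sum_{j\in N}\bar a_{ij}x_j\ (i\in B),\ x\ge0\}$ with $\bar b\ge0$. The basic solution $\bar x$ has $\bar x_i=\bar b_i$ ($i\in B$) and $0$ ($i\in N$). $P^B$ is obtained by dropping $x_i\ge0$ for $i\in B$. For $j\in N$, $\bar r^j$ has $\bar r^j_k=-\bar a_{kj}$ ($k\in B$), $\bar r^j_j=1$, and $0$ otherwise. Thus $P^B=\{\bar x+\sum_{j\in N}x_j\bar r^j:x_j\ge0\}$. It is assumed that $\bar x\notin\mathrm{cl}(C)$. For $j\in N$, $\alpha_j=\inf\{\lambda\ge0:\bar x+\lambda\bar r^j\in C\}$ and $\beta_j=\sup\{\lambda\ge0:\bar x+\lambda\bar r^j\in C\}$, with $\alpha_j=+\infty$, $\beta_j=-\infty$ if the halfline misses $C$. Define - $N_1=\{j:\alpha_j\in(0,\infty),\beta_j=+\infty\}$; - $N_2=\{j:\alpha_j\in(0,\infty),\beta_j\in(\alpha_j,\infty)\}$.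 For a set $K$, $\mathrm{recc}(K)=\{d:x+\lambda d\in K\ \forall x\in K,\lambda\ge0\}$. For $D\subseteq N_1\cup N_2$, $G_D^C=\{\bar x\}+\mathrm{conv}\big(\bigcup_{j\in D}\{\lambda\bar r^j:\lambda>\alpha_j\}\big)+\mathrm{recc}(C)$. For $(i,j)\in D\times(N\setminus D)$, $\gamma_{ij}=\sup\{\gamma\ge0:\alpha_i\bar r^i+\gamma\bar r^j\in\mathrm{recc}(G_D^C)\}$ (possibly $+\infty$). Let $M_D=\{i\in D:\gamma_{ij}>0\ \forall j\in N\setminus D\}$. *)

theory Defs
  imports "HOL-Analysis.Analysis"
begin

definition recc :: "('a::real_vector) set \<Rightarrow> 'a set" where
  "recc K = {d. \<forall>x\<in>K. \<forall>t::real. t \<ge> 0 \<longrightarrow> x + t *\<^sub>R d \<in> K}"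

definition is_basis :: "real^'n^'m \<Rightarrow> 'n set \<Rightarrow> bool" where
  "is_basis A B \<longleftrightarrow> card B = CARD('m) \<and> inj_on (\<lambda>k. column k A) B
      \<and> independent ((\<lambda>k. column k A) ` B)"

definition xbar :: "'n set \<Rightarrow> ('n \<Rightarrow> real) \<Rightarrow> real^'n::finite" where
  "xbar B bb = (\<chi> k. if k \<in> B then bb k else 0)"

definition rbar :: "'n set \<Rightarrow> ('n \<Rightarrow> 'n \<Rightarrow> real) \<Rightarrow> 'n \<Rightarrow> real^'n::finite" where
  "rbar B ab j = (\<chi> k. if k \<in> B then - ab k j else if k = j then 1 else 0)"

text \<open>P^B: drop the nonnegativity of the basic variables.\<close>
definition PB :: "'n::finite set \<Rightarrow> ('n \<Rightarrow> real) \<Rightarrow> ('n \<Rightarrow> 'n \<Rightarrow> real) \<Rightarrow> (real^'n) set" where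
  "PB B bb ab = {x. (\<forall>i\<in>B. x$i = bb i - (\<Sum>j\<in>UNIV - B. ab i j * x$j))
                   \<and> (\<forall>j\<in>UNIV - B. x$j \<ge> 0)}"

text \<open>alpha_j (inf, +infinity if empty) and beta_j (sup, -infinity if empty).\<close>
definition alpha :: "(real^'n::finite) set \<Rightarrow> real^'n \<Rightarrow> real^'n \<Rightarrow> ereal" where
  "alpha C x r = Inf (ereal ` {t. t \<ge> 0 \<and> x + t *\<^sub>R r \<in> C})"

definition beta :: "(real^'n::finite) set \<Rightarrow> real^'n \<Rightarrow> real^'n \<Rightarrow> ereal" where
  "beta C x r = Sup (ereal ` {t. t \<ge> 0 \<and> x + t *\<^sub>R r \<in> C})"

definition N1 :: "(real^'n::finite) set \<Rightarrow> 'n set \<Rightarrow> ('n \<Rightarrow> real) \<Rightarrow> ('n \<Rightarrow> 'n \<Rightarrow> real) \<Rightarrow> 'n set" where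
  "N1 C B bb ab = {j \<in> UNIV - B.
     0 < alpha C (xbar B bb) (rbar B ab j) \<and> alpha C (xbar B bb) (rbar B ab j) < \<infinity>
     \<and> beta C (xbar B bb) (rbar B ab j) = \<infinity>}"

definition N2 :: "(real^'n::finite) set \<Rightarrow> 'n set \<Rightarrow> ('n \<Rightarrow> real) \<Rightarrow> ('n \<Rightarrow> 'n \<Rightarrow> real) \<Rightarrow> 'n set" where
  "N2 C B bb ab = {j \<in> UNIV - B.
     0 < alpha C (xbar B bb) (rbar B ab j) \<and> alpha C (xbar B bb) (rbar B ab j) < \<infinity>
     \<and> alpha C (xbar B bb) (rbar B ab j) < beta C (xbar B bb) (rbar B ab j)
     \<and> beta C (xbar B bb) (rbar B ab j) < \<infinity>}"

definition GDC :: "(real^'n::finite) set \<Rightarrow> 'n set \<Rightarrow> ('n \<Rightarrow> real) \<Rightarrow> ('n \<Rightarrow> 'n \<Rightarrow> real) \<Rightarrow> 'n set \<Rightarrow> (real^'n) set" where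
  "GDC C B bb ab D = {xbar B bb + y + z | y z.
      y \<in> convex hull (\<Union>j\<in>D. {t *\<^sub>R rbar B ab j | t.
                 ereal t > alpha C (xbar B bb) (rbar B ab j)})
      \<and> z \<in> recc C}"

definition gamma :: "(real^'n::finite) set \<Rightarrow> 'n set \<Rightarrow> ('n \<Rightarrow> real) \<Rightarrow> ('n \<Rightarrow> 'n \<Rightarrow> real) \<Rightarrow> 'n set \<Rightarrow> 'n \<Rightarrow> 'n \<Rightarrow> ereal" where
  "gamma C B bb ab D i j = Sup (ereal ` {g. g \<ge> 0 \<and>
      real_of_ereal (alpha C (xbar B bb) (rbar B ab i)) *\<^sub>R rbar B ab i + g *\<^sub>R rbar B ab j
        \<in> recc (GDC C B bb ab D)})"

definition MD :: "(real^'n::finite) set \<Rightarrow> 'n set \<Rightarrow> ('n \<Rightarrow> real) \<Rightarrow> ('n \<Rightarrow> 'n \<Rightarrow> real) \<Rightarrow> 'n set \<Rightarrow> 'n set" where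
  "MD C B bb ab D = {i \<in> D. \<forall>j \<in> UNIV - B - D. gamma C B bb ab D i j > 0}"

end

theory Submission
  imports Defs
begin

lemma recc_comb:
  assumes "d1 \<in> recc K" "d2 \<in> recc K" "p1 \<ge> 0" "p2 \<ge> 0"
  shows "p1 *\<^sub>R d1 + p2 *\<^sub>R d2 \<in> recc K"
  unfolding recc_def
proof (intro CollectI ballI allI impI)
  fix x and t :: real assume x: "x \<in> K" and t: "t \<ge> 0"
  have "x + (t*p1) *\<^sub>R d1 \<in> K" using assms(1,3) x t unfolding recc_def by simp
  hence "(x + (t*p1) *\<^sub>R d1) + (t*p2) *\<^sub>R d2 \<in> K" using assms(2,4) t unfolding recc_def by simp
  thus "x + t *\<^sub>R (p1 *\<^sub>R d1 + p2 *\<^sub>R d2) \<in> K" by (simp add: algebra_simps)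
qed

lemma alpha_nonneg: "alpha C x r \<ge> 0"
  unfolding alpha_def by (auto intro: Inf_greatest)

lemma hull_step:
  fixes U :: "(real^'n::finite) set"
  assumes scale: "\<And>u s. u \<in> U \<Longrightarrow> s \<ge> 1 \<Longrightarrow> s *\<^sub>R u \<in> U"
    and ray: "\<And>t. t > ar \<Longrightarrow> t *\<^sub>R r \<in> U"
    and h: "h \<in> convex hull U" and c: "c > 0"
  shows "h + c *\<^sub>R r \<in> convex hull U"
proof -
  define M where "M = max 2 (2 * (max ar 0) / c + 2)"
  have M2: "M \<ge> 2" unfolding M_def by simp
  define e where "e = 1 / M"
  have e0: "0 < e" "e < 1" using M2 unfolding e_def by auto
  have "c / e = c * M" unfolding e_def by simp
  also have "c * M \<ge> c * (2 * (max ar 0) / c + 2)" using c unfolding M_def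
    by (intro mult_left_mono) auto
  also have "c * (2 * (max ar 0) / c + 2) = 2 * max ar 0 + 2 * c" using c by (simp add: field_simps)
  finally have "c / e > ar" using c by linarith
  hence "(c / e) *\<^sub>R r \<in> U" by (rule ray)
  hence p1: "(c / e) *\<^sub>R r \<in> convex hull U" by (rule hull_inc)
  have ge1: "1/(1-e) \<ge> 1" using e0 by simp
  have sub: "(*\<^sub>R) (1/(1-e)) ` U \<subseteq> U"
  proof
    fix v assume "v \<in> (*\<^sub>R) (1/(1-e)) ` U"
    then obtain u where u: "u \<in> U" "v = (1/(1-e)) *\<^sub>R u" by (rule imageE)
    show "v \<in> U" unfolding u(2) using u(1) ge1 by (rule scale)
  qed
  have "(1/(1-e)) *\<^sub>R h \<in> (*\<^sub>R) (1/(1-e)) ` (convex hull U)" using h by (rule imageI)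
  also have "\<dots> = convex hull ((*\<^sub>R) (1/(1-e)) ` U)" by (simp add: convex_hull_scaling)
  also have "\<dots> \<subseteq> convex hull U" using sub by (rule hull_mono)
  finally have p2: "(1/(1-e)) *\<^sub>R h \<in> convex hull U" .
  have "(1 - e) *\<^sub>R ((1/(1-e)) *\<^sub>R h) + e *\<^sub>R ((c / e) *\<^sub>R r) \<in> convex hull U"
    by (rule convexD[OF convex_convex_hull p2 p1]) (use e0 in auto)
  moreover have "(1 - e) *\<^sub>R ((1/(1-e)) *\<^sub>R h) + e *\<^sub>R ((c / e) *\<^sub>R r) = h + c *\<^sub>R r"
    using e0 by simp
  ultimately show ?thesis by simp
qed

theorem proposition2:
  fixes A :: "real^'n::finite^'m::finite" and b :: "real^'m"
    and B :: "'n set" and bb :: "'n \<Rightarrow> real" and ab :: "'n \<Rightarrow> 'n \<Rightarrow> real"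
    and C :: "(real^'n) set" and D :: "'n set" and i j :: 'n and g :: real
  assumes full_rank: "rank A = CARD('m)"
    and basis: "is_basis A B"
    and tableau: "\<And>x. A *v x = b \<longleftrightarrow>
                    (\<forall>k\<in>B. x$k = bb k - (\<Sum>l\<in>UNIV - B. ab k l * x$l))"
    and bb_nonneg: "\<forall>k\<in>B. bb k \<ge> 0"
    and C_open: "open C" and C_convex: "convex C"
    and xbar_notin: "xbar B bb \<notin> closure C"
    and recc_sub: "recc C \<subseteq> recc (PB B bb ab)"
    and D_sub: "D \<subseteq> N1 C B bb ab \<union> N2 C B bb ab"
    and i_in: "i \<in> MD C B bb ab D"
    and j_in: "j \<in> UNIV - B - D"
    and g_nonneg: "0 \<le> g"
    and g_less: "ereal g < gamma C B bb ab D i j"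
  shows "real_of_ereal (alpha C (xbar B bb) (rbar B ab i)) *\<^sub>R rbar B ab i + g *\<^sub>R rbar B ab j
           \<in> recc (GDC C B bb ab D)"
proof -
  let ?xb = "xbar B bb"
  let ?al = "\<lambda>k. alpha C ?xb (rbar B ab k)"
  define U where "U = (\<Union>k\<in>D. {t *\<^sub>R rbar B ab k | t. ereal t > ?al k})"
  define ar where "ar = real_of_ereal (?al i)"
  define a where "a = ar *\<^sub>R rbar B ab i"
  have iD: "i \<in> D" using i_in unfolding MD_def by auto
  have fin0: "0 < ?al i \<and> ?al i < \<infinity>" using D_sub iD unfolding N1_def N2_def by auto
  have fin: "?al i = ereal ar" using fin0 unfolding ar_def
    by (cases "?al i") auto
  have ar0: "ar \<ge> 0" using alpha_nonneg[of C ?xb "rbar B ab i"] fin by simp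
  have G: "GDC C B bb ab D = {?xb + y + z | y z. y \<in> convex hull U \<and> z \<in> recc C}"
    unfolding GDC_def U_def by simp
  have scale: "s *\<^sub>R u \<in> U" if "u \<in> U" "s \<ge> 1" for u s
  proof -
    from that(1) obtain k where k0: "k \<in> D" "u \<in> {t *\<^sub>R rbar B ab k | t. ereal t > ?al k}"
      unfolding U_def by blast
    from k0(2) obtain t where k: "ereal t > ?al k" "u = t *\<^sub>R rbar B ab k" by blast
    have "(0::ereal) < ereal t" using alpha_nonneg[of C ?xb "rbar B ab k"] k(1)
      by (rule order.strict_trans1)
    hence "t > 0" by simp
    hence "s * t \<ge> t" using that(2) by simp
    hence "ereal t \<le> ereal (s * t)" by simp
    hence "ereal (s * t) > ?al k" using k(1) by (rule order.strict_trans2[rotated])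
    hence "(s * t) *\<^sub>R rbar B ab k \<in> U" using k0(1) unfolding U_def by blast
    thus ?thesis using k(2) by simp
  qed
  have ray: "t *\<^sub>R rbar B ab i \<in> U" if "t > ar" for t
  proof -
    have "ereal t > ?al i" using that fin by simp
    hence "t *\<^sub>R rbar B ab i \<in> {t *\<^sub>R rbar B ab i | t. ereal t > ?al i}" by blast
    thus ?thesis using iD unfolding U_def by blast
  qed
  have a_recc: "a \<in> recc (GDC C B bb ab D)"
    unfolding recc_def
  proof (intro CollectI ballI allI impI)
    fix x and t :: real assume x: "x \<in> GDC C B bb ab D" and t: "t \<ge> 0"
    from x obtain y z where yz: "x = ?xb + y + z" "y \<in> convex hull U" "z \<in> recc C"
      unfolding G by auto
    have "y + (t * ar) *\<^sub>R rbar B ab i \<in> convex hull U"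
    proof (cases "t * ar = 0")
      case True
      have "y + (t * ar) *\<^sub>R rbar B ab i = y" unfolding True by simp
      thus ?thesis using yz(2) by (simp only:)
    next
      case False
      hence "t * ar > 0" using t ar0 by simp
      thus ?thesis using hull_step[OF scale ray yz(2)] by blast
    qed
    moreover have "x + t *\<^sub>R a = ?xb + (y + (t * ar) *\<^sub>R rbar B ab i) + z"
      using yz unfolding a_def by (simp add: algebra_simps)
    ultimately show "x + t *\<^sub>R a \<in> GDC C B bb ab D" using yz(3) unfolding G by blast
  qed
  let ?S = "{g. g \<ge> 0 \<and> a + g *\<^sub>R rbar B ab j \<in> recc (GDC C B bb ab D)}"
  have "ereal g < Sup (ereal ` ?S)" using g_less unfolding gamma_def a_def ar_def by simp
  then obtain g' where g': "g' \<in> ?S" "g < g'" by (auto simp: less_Sup_iff)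
  have "(1 - g/g') *\<^sub>R a + (g/g') *\<^sub>R (a + g' *\<^sub>R rbar B ab j) \<in> recc (GDC C B bb ab D)"
    using g' g_nonneg by (intro recc_comb a_recc) auto
  moreover have "(1 - g/g') *\<^sub>R a + (g/g') *\<^sub>R (a + g' *\<^sub>R rbar B ab j) = a + g *\<^sub>R rbar B ab j"
    using g' g_nonneg by (simp add: algebra_simps)
  ultimately have "a + g *\<^sub>R rbar B ab j \<in> recc (GDC C B bb ab D)" by (simp only:)
  thus ?thesis unfolding a_def ar_def .
qed

end
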